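(* There is an absolute constant $K$ such that the following holds. Let $k,n$ be integers larger than $1$, and let $w$ be the width of $[k]^n$. If $\mathcal{F}\subset[k]^n$ does not contain three distinct elements $\mathbf u,\mathbf v,\mathbf w$ with $\mathbf u=\mathbf v\vee\mathbf w$, then $|\mathcal{F}|\le K w$.
   Context: $[k]^n=\{1,\dots,k\}^n$ with the coordinatewise order; its width is the size of its largest antichain. For $\mathbf v,\mathbf w\in[k]^n$, $\mathbf v\vee\mathbf w=(\max\{\mathbf v(1),\mathbf w(1)\},\dots,\max\{\mathbf v(n),\mathbf w(n)\})$. *)

theory Defs
  imports Complex_Main "HOL-Library.FuncSet"
begin

definition grid :: "nat \<Rightarrow> nat \<Rightarrow> (nat \<Rightarrow> nat) set" where
  "grid k n = PiE {..<n} (\<lambda>_. {1..k})"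

definition cw_le :: "nat \<Rightarrow> (nat \<Rightarrow> nat) \<Rightarrow> (nat \<Rightarrow> nat) \<Rightarrow> bool" where
  "cw_le n v w \<longleftrightarrow> (\<forall>i<n. v i \<le> w i)"

definition grid_antichain :: "nat \<Rightarrow> nat \<Rightarrow> (nat \<Rightarrow> nat) set \<Rightarrow> bool" where
  "grid_antichain k n A \<longleftrightarrow> A \<subseteq> grid k n \<and> (\<forall>v\<in>A. \<forall>w\<in>A. cw_le n v w \<longrightarrow> v = w)"

definition grid_width :: "nat \<Rightarrow> nat \<Rightarrow> nat" where
  "grid_width k n = Max (card ` {A. grid_antichain k n A})"

definition join :: "nat \<Rightarrow> (nat \<Rightarrow> nat) \<Rightarrow> (nat \<Rightarrow> nat) \<Rightarrow> (nat \<Rightarrow> nat)" where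
  "join n v w = (\<lambda>i\<in>{..<n}. max (v i) (w i))"

end

theory Submission
  imports Defs "HOL-Computational_Algebra.Polynomial"
begin


definition rk :: "nat \<Rightarrow> (nat\<Rightarrow>nat) \<Rightarrow> nat" where "rk m x = (\<Sum>i<m. x i - 1)"

definition okg :: "nat \<Rightarrow> nat \<Rightarrow> (nat\<Rightarrow>nat) \<Rightarrow> bool" where
  "okg k m x \<longleftrightarrow> (\<forall>i<m. 1 \<le> x i \<and> x i \<le> k)"

fun remc :: "nat \<Rightarrow> nat \<Rightarrow> (nat \<Rightarrow> nat) \<Rightarrow> nat" where
  "remc k 0 x = 0"
| "remc k (Suc m) x = (if x m - 1 < remc k m x then remc k m x - (x m - 1) + (k - 1 - (x m - 1)) else k - 1 - (x m - 1))"

fun idx :: "nat \<Rightarrow> nat \<Rightarrow> (nat \<Rightarrow> nat) \<Rightarrow> nat" where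
  "idx k 0 x = 0"
| "idx k (Suc m) x = (if x m - 1 < remc k m x then idx k m x else m)"

definition sc :: "nat \<Rightarrow> nat \<Rightarrow> (nat \<Rightarrow> nat) \<Rightarrow> (nat \<Rightarrow> nat)" where
  "sc k m x = x(idx k m x := x (idx k m x) + 1)"

lemma rk_Suc: "rk (Suc m) x = rk m x + (x m - 1)"
  by (simp add: rk_def)

lemma okg_Suc: "okg k (Suc m) x \<longleftrightarrow> okg k m x \<and> 1 \<le> x m \<and> x m \<le> k"
  by (auto simp: okg_def less_Suc_eq)

lemma remc_cong: "(\<forall>i<m. x i = y i) \<Longrightarrow> remc k m x = remc k m y \<and> idx k m x = idx k m y"
  by (induction m) auto

lemma L1: "okg k m x \<Longrightarrow> m*(k-1) \<le> remc k m x + 2 * rk m x"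
proof (induction m)
  case 0 then show ?case by simp
next
  case (Suc m)
  then have ih: "m*(k-1) \<le> remc k m x + 2 * rk m x" and b: "1 \<le> x m" "x m \<le> k"
    by (auto simp: okg_Suc)
  show ?case using ih b by (auto simp: rk_Suc)
qed

lemma L2: "okg k m x \<Longrightarrow> 0 < remc k m x \<Longrightarrow> idx k m x < m \<and> x (idx k m x) < k"
proof (induction m)
  case 0 then show ?case by simp
next
  case (Suc m)
  then have b: "1 \<le> x m" "x m \<le> k" "okg k m x" by (auto simp: okg_Suc)
  show ?case
  proof (cases "x m - 1 < remc k m x")
    case True
    then show ?thesis using Suc b by auto
  next
    case False
    then show ?thesis using Suc b by auto
  qed
qed

lemma sc_Suc_A: "x m - 1 < remc k m x \<Longrightarrow> sc k (Suc m) x = sc k m x"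
  by (simp add: sc_def)

lemma sc_Suc_B: "\<not> x m - 1 < remc k m x \<Longrightarrow> sc k (Suc m) x = x(m := x m + 1)"
  by (simp add: sc_def)

lemma L3: "okg k m x \<Longrightarrow> 0 < remc k m x \<Longrightarrow> remc k m (sc k m x) = remc k m x - 1"
proof (induction m)
  case 0 then show ?case by simp
next
  case (Suc m)
  then have b: "1 \<le> x m" "x m \<le> k" "okg k m x" by (auto simp: okg_Suc)
  show ?case
  proof (cases "x m - 1 < remc k m x")
    case True
    have pos: "0 < remc k m x" using True by simp
    have i: "idx k m x < m" using L2[OF b(3) pos] by simp
    have sm: "sc k m x m = x m" using i by (simp add: sc_def)
    have ih: "remc k m (sc k m x) = remc k m x - 1" using Suc.IH[OF b(3) pos] .
    show ?thesis using True sm ih b apply (simp add: sc_Suc_A) by arith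
  next
    case False
    have eq: "remc k m (\<lambda>a. if a = m then Suc (x m) else x a) = remc k m x"
      using remc_cong[of m "\<lambda>a. if a = m then Suc (x m) else x a" x k] by simp
    show ?thesis using False Suc.prems b eq by (simp add: sc_Suc_B)
  qed
qed

lemma L4: "okg k m x \<Longrightarrow> okg k m y \<Longrightarrow> 0 < remc k m x \<Longrightarrow> 0 < remc k m y \<Longrightarrow>
  (\<forall>i<m. sc k m x i = sc k m y i) \<Longrightarrow> (\<forall>i<m. x i = y i)"
proof (induction m)
  case 0 then show ?case by simp
next
  case (Suc m)
  have bx: "1 \<le> x m" "x m \<le> k" "okg k m x" using Suc.prems by (auto simp: okg_Suc)
  have by': "1 \<le> y m" "x m \<le> k" "okg k m y" using Suc.prems by (auto simp: okg_Suc)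
  have E: "\<forall>i<Suc m. sc k (Suc m) x i = sc k (Suc m) y i" using Suc.prems by simp
  show ?case
  proof (cases "x m - 1 < remc k m x"; cases "y m - 1 < remc k m y")
    assume A1: "x m - 1 < remc k m x" and A2: "y m - 1 < remc k m y"
    have ix: "idx k m x < m" using L2[OF bx(3)] A1 by simp
    have iy: "idx k m y < m" using L2[OF by'(3)] A2 by simp
    have "\<forall>i<m. sc k m x i = sc k m y i" using E A1 A2 by (simp add: sc_Suc_A)
    then have "\<forall>i<m. x i = y i" using Suc.IH bx by' A1 A2 by auto
    moreover have "x m = y m" using E[rule_format, of m] A1 A2 ix iy by (simp add: sc_Suc_A sc_def)
    ultimately show ?thesis by (auto simp: less_Suc_eq)
  next
    assume A1: "\<not> x m - 1 < remc k m x" and A2: "\<not> y m - 1 < remc k m y"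
    show ?thesis using E A1 A2 by (auto simp: sc_Suc_B less_Suc_eq split: if_splits)
  next
    assume A1: "x m - 1 < remc k m x" and A2: "\<not> y m - 1 < remc k m y"
    have ix: "idx k m x < m" using L2[OF bx(3)] A1 by simp
    have e1: "\<forall>i<m. sc k m x i = y i" using E A1 A2 by (auto simp: sc_Suc_A sc_Suc_B)
    have e2: "x m = y m + 1" using E[rule_format, of m] A1 A2 ix by (simp add: sc_Suc_A sc_Suc_B sc_def)
    have "remc k m y = remc k m (sc k m x)" using remc_cong[of m y "sc k m x" k] e1 by simp
    also have "\<dots> = remc k m x - 1" using L3[OF bx(3)] A1 by simp
    finally show ?thesis using A1 A2 e2 bx by' by simp
  next
    assume A1: "\<not> x m - 1 < remc k m x" and A2: "y m - 1 < remc k m y"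
    have iy: "idx k m y < m" using L2[OF by'(3)] A2 by simp
    have e1: "\<forall>i<m. sc k m y i = x i"
    proof (intro allI impI)
      fix i assume "i < m" then show "sc k m y i = x i" using E[rule_format, of i] A1 A2 by (simp add: sc_Suc_A sc_Suc_B)
    qed
    have e2: "y m = x m + 1" using E[rule_format, of m] A1 A2 iy by (simp add: sc_Suc_A sc_Suc_B sc_def)
    have "remc k m x = remc k m (sc k m y)" using remc_cong[of m x "sc k m y" k] e1 by simp
    also have "\<dots> = remc k m y - 1" using L3[OF by'(3)] A2 by simp
    finally show ?thesis using A1 A2 e2 bx by' by simp
  qed
qed

definition lev :: "nat \<Rightarrow> nat \<Rightarrow> nat \<Rightarrow> (nat\<Rightarrow>nat) set" where
  "lev k m t = {x \<in> grid k m. rk m x = t}"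

lemma finite_grid: "finite (grid k m)"
  by (simp add: grid_def finite_PiE)

lemma grid_okg: "x \<in> grid k m \<Longrightarrow> okg k m x"
  by (auto simp: grid_def okg_def PiE_iff)

lemma grid_out: "x \<in> grid k m \<Longrightarrow> i \<ge> m \<Longrightarrow> x i = undefined"
  by (auto simp: grid_def PiE_iff extensional_def)

lemma grid_iff: "x \<in> grid k m \<longleftrightarrow> okg k m x \<and> (\<forall>i\<ge>m. x i = undefined)"
  by (auto simp: grid_def okg_def PiE_iff extensional_def)

lemma rem_pos: "x \<in> grid k m \<Longrightarrow> 2 * rk m x < m*(k-1) \<Longrightarrow> 0 < remc k m x"
  using L1[OF grid_okg] by fastforce

lemma sc_props:
  assumes "x \<in> grid k m" "0 < remc k m x"
  shows "sc k m x \<in> grid k m \<and> rk m (sc k m x) = rk m x + 1 \<and> cw_le m x (sc k m x)"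
proof -
  have i: "idx k m x < m" "x (idx k m x) < k" using L2[OF grid_okg[OF assms(1)] assms(2)] by auto
  have g: "sc k m x \<in> grid k m" using assms(1) i unfolding grid_iff okg_def sc_def by auto
  have "rk m (sc k m x) = (\<Sum>j<m. x j - 1) + 1"
  proof -
    have "(\<Sum>j<m. sc k m x j - 1) = (\<Sum>j<m. (x j - 1) + (if j = idx k m x then 1 else 0))"
      using assms(1) i by (intro sum.cong) (auto simp: sc_def grid_iff okg_def)
    also have "\<dots> = (\<Sum>j<m. x j - 1) + 1" using i by (simp add: sum.distrib)
    finally show ?thesis by (simp add: rk_def)
  qed
  moreover have "cw_le m x (sc k m x)" by (auto simp: cw_le_def sc_def)
  ultimately show ?thesis using g by (simp add: rk_def)
qed

lemma sc_inj: "x \<in> grid k m \<Longrightarrow> y \<in> grid k m \<Longrightarrow> 0 < remc k m x \<Longrightarrow> 0 < remc k m y \<Longrightarrow>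
   sc k m x = sc k m y \<Longrightarrow> x = y"
  using L4[OF grid_okg grid_okg, of x k m y] by (metis PiE_ext grid_def lessThan_iff)

definition it :: "nat \<Rightarrow> nat \<Rightarrow> nat \<Rightarrow> (nat\<Rightarrow>nat) \<Rightarrow> (nat\<Rightarrow>nat)" where
  "it k m j x = (sc k m ^^ j) x"

lemma cw_le_trans: "cw_le m x y \<Longrightarrow> cw_le m y z \<Longrightarrow> cw_le m x z"
  by (auto simp: cw_le_def intro: order_trans)

lemma it_props:
  assumes "x \<in> grid k m" "rk m x + j \<le> m*(k-1) div 2"
  shows "it k m j x \<in> grid k m \<and> rk m (it k m j x) = rk m x + j \<and> cw_le m x (it k m j x)"
  using assms(2)
proof (induction j)
  case 0 then show ?case using assms(1) by (simp add: it_def cw_le_def)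
next
  case (Suc j)
  then have ih: "it k m j x \<in> grid k m" "rk m (it k m j x) = rk m x + j" "cw_le m x (it k m j x)" by auto
  have "2 * rk m (it k m j x) < m*(k-1)" using ih(2) Suc.prems by linarith
  then have p: "0 < remc k m (it k m j x)" using rem_pos ih(1) by blast
  have e: "it k m (Suc j) x = sc k m (it k m j x)" by (simp add: it_def)
  show ?case using sc_props[OF ih(1) p] ih e cw_le_trans by auto
qed

lemma it_peel:
  assumes "x \<in> grid k m" "y \<in> grid k m" "rk m x + c + b \<le> m*(k-1) div 2" "rk m y + b \<le> m*(k-1) div 2"
    "it k m (c+b) x = it k m b y"
  shows "it k m c x = y"
  using assms(3-5)
proof (induction b)
  case 0 then show ?case by (simp add: it_def)
next
  case (Suc b)
  have gx: "it k m (c+b) x \<in> grid k m" "rk m (it k m (c+b) x) = rk m x + (c+b)"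
    using it_props[OF assms(1), of "c+b"] Suc.prems by auto
  have gy: "it k m b y \<in> grid k m" "rk m (it k m b y) = rk m y + b"
    using it_props[OF assms(2), of b] Suc.prems by auto
  have px: "0 < remc k m (it k m (c+b) x)" using rem_pos[OF gx(1)] gx(2) Suc.prems by linarith
  have py: "0 < remc k m (it k m b y)" using rem_pos[OF gy(1)] gy(2) Suc.prems by linarith
  have "sc k m (it k m (c+b) x) = sc k m (it k m b y)" using Suc.prems(3) by (simp add: it_def)
  then have "it k m (c+b) x = it k m b y" using sc_inj[OF gx(1) gy(1) px py] by blast
  then show ?case using Suc.IH Suc.prems by simp
qed

lemma sperner_low:
  assumes A: "grid_antichain k m A" and low: "\<forall>x\<in>A. 2 * rk m x \<le> m*(k-1)"
  shows "card A \<le> card (lev k m (m*(k-1) div 2))"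
proof -
  define M where "M = m*(k-1) div 2"
  have AG: "A \<subseteq> grid k m" using A by (simp add: grid_antichain_def)
  have rx: "rk m x \<le> M" if "x \<in> A" for x using low that unfolding M_def by fastforce
  define g where "g x = it k m (M - rk m x) x" for x
  have gp: "g x \<in> lev k m M \<and> cw_le m x (g x)" if "x \<in> A" for x
    using it_props[OF subsetD[OF AG that], of "M - rk m x"] rx[OF that] unfolding g_def lev_def M_def
    by auto
  have inj: "inj_on g A"
  proof (rule inj_onI)
    have key: "x = y" if xy: "x \<in> A" "y \<in> A" "g x = g y" "rk m x \<le> rk m y" for x y
    proof -
      have rxy: "rk m x \<le> M" "rk m y \<le> M" using rx xy by auto
      have cb: "(rk m y - rk m x) + (M - rk m y) = M - rk m x" using rxy xy(4) by linarith
      have e: "it k m ((rk m y - rk m x) + (M - rk m y)) x = it k m (M - rk m y) y"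
        using xy(3) cb unfolding g_def by simp
      have h1: "rk m x + (rk m y - rk m x) + (M - rk m y) \<le> m*(k-1) div 2"
        using rxy xy(4) unfolding M_def by linarith
      have h2: "rk m y + (M - rk m y) \<le> m*(k-1) div 2" using rxy unfolding M_def by linarith
      have e2: "it k m (rk m y - rk m x) x = y"
        by (rule it_peel[OF subsetD[OF AG xy(1)] subsetD[OF AG xy(2)] h1 h2 e])
      have h3: "rk m x + (rk m y - rk m x) \<le> m*(k-1) div 2" using h1 by linarith
      have "cw_le m x y" using it_props[OF subsetD[OF AG xy(1)] h3] e2 by simp
      then show ?thesis using A xy unfolding grid_antichain_def by blast
    qed
    fix x y assume "x \<in> A" "y \<in> A" "g x = g y"
    then show "x = y" using key[of x y] key[of y x] by (metis nat_le_linear)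
  qed
  have "g ` A \<subseteq> lev k m M" using gp by auto
  moreover have "finite (lev k m M)" using finite_grid by (simp add: lev_def)
  ultimately show ?thesis using card_inj_on_le[OF inj] unfolding M_def by blast
qed

definition cpl :: "nat \<Rightarrow> nat \<Rightarrow> (nat\<Rightarrow>nat) \<Rightarrow> (nat\<Rightarrow>nat)" where
  "cpl k m x = (\<lambda>i\<in>{..<m}. k + 1 - x i)"

lemma cpl_grid: "x \<in> grid k m \<Longrightarrow> cpl k m x \<in> grid k m"
  by (auto simp: grid_iff okg_def cpl_def)

lemma cpl_rk: "x \<in> grid k m \<Longrightarrow> rk m (cpl k m x) + rk m x = m*(k-1)"
proof -
  assume x: "x \<in> grid k m"
  have "rk m (cpl k m x) + rk m x = (\<Sum>i<m. (k + 1 - x i - 1) + (x i - 1))"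
    by (simp add: rk_def cpl_def sum.distrib)
  also have "\<dots> = (\<Sum>i<m. k - 1)"
    using x by (intro sum.cong) (auto simp: grid_iff okg_def)
  finally show ?thesis by simp
qed

lemma cpl_le: "x \<in> grid k m \<Longrightarrow> y \<in> grid k m \<Longrightarrow> cw_le m (cpl k m x) (cpl k m y) \<longleftrightarrow> cw_le m y x"
proof -
  assume a: "x \<in> grid k m" "y \<in> grid k m"
  have "\<forall>i<m. (k + 1 - x i \<le> k + 1 - y i) = (y i \<le> x i)" using a by (auto simp: grid_iff okg_def)
  then show ?thesis by (auto simp: cw_le_def cpl_def)
qed

lemma cpl_inj: "inj_on (cpl k m) (grid k m)"
proof (rule inj_onI)
  fix x y assume xy: "x \<in> grid k m" "y \<in> grid k m" "cpl k m x = cpl k m y"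
  show "x = y"
  proof (rule PiE_ext[OF xy(1)[unfolded grid_def] xy(2)[unfolded grid_def]])
    fix i assume i: "i \<in> {..<m}"
    have "k + 1 - x i = k + 1 - y i" using fun_cong[OF xy(3), of i] i by (simp add: cpl_def)
    then show "x i = y i" using xy(1,2) i by (auto simp: grid_iff okg_def)
  qed
qed

lemma sperner:
  assumes A: "grid_antichain k m A"
  shows "card A \<le> 2 * card (lev k m (m*(k-1) div 2))"
proof -
  have AG: "A \<subseteq> grid k m" using A by (simp add: grid_antichain_def)
  have fA: "finite A" using AG finite_grid finite_subset by blast
  define A1 where "A1 = {x\<in>A. 2 * rk m x \<le> m*(k-1)}"
  define A2 where "A2 = {x\<in>A. \<not> 2 * rk m x \<le> m*(k-1)}"
  have "A = A1 \<union> A2" unfolding A1_def A2_def by auto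
  then have c: "card A \<le> card A1 + card A2" by (metis card_Un_le)
  have a1: "grid_antichain k m A1" using A unfolding grid_antichain_def A1_def by auto
  have c1: "card A1 \<le> card (lev k m (m*(k-1) div 2))"
    by (rule sperner_low[OF a1]) (auto simp: A1_def)
  have A2A: "A2 \<subseteq> A" by (auto simp: A2_def)
  have sub: "cpl k m ` A2 \<subseteq> grid k m" using AG A2A cpl_grid by blast
  have anti: "\<forall>u\<in>cpl k m ` A2. \<forall>v\<in>cpl k m ` A2. cw_le m u v \<longrightarrow> u = v"
  proof (intro ballI impI)
    fix u v assume u: "u \<in> cpl k m ` A2" and v: "v \<in> cpl k m ` A2" and le: "cw_le m u v"
    obtain x where x: "x \<in> A2" "u = cpl k m x" using u by blast
    obtain y where y: "y \<in> A2" "v = cpl k m y" using v by blast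
    have gx: "x \<in> grid k m" and gy: "y \<in> grid k m" using x y A2A AG by auto
    have "cw_le m y x" using cpl_le[OF gx gy] le x y by simp
    then have "y = x" using A x y A2A unfolding grid_antichain_def by blast
    then show "u = v" using x y by simp
  qed
  have a2: "grid_antichain k m (cpl k m ` A2)" using sub anti by (simp add: grid_antichain_def)
  have "2 * rk m u \<le> m*(k-1)" if u: "u \<in> cpl k m ` A2" for u
  proof -
    obtain x where x: "x \<in> A2" "u = cpl k m x" using u by blast
    have gx: "x \<in> grid k m" using x A2A AG by auto
    have "rk m u + rk m x = m*(k-1)" using cpl_rk[OF gx] x by simp
    moreover have "\<not> 2 * rk m x \<le> m*(k-1)" using x by (simp add: A2_def)
    ultimately show ?thesis by linarith
  qed
  then have c2: "card (cpl k m ` A2) \<le> card (lev k m (m*(k-1) div 2))"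
    using sperner_low[OF a2] by blast
  have "card (cpl k m ` A2) = card A2"
    using cpl_inj AG by (intro card_image) (auto simp: A2_def intro: inj_on_subset)
  then show ?thesis using c c1 c2 by linarith
qed

lemma width_bound: "grid_width k m \<le> 2 * card (lev k m (m*(k-1) div 2))"
proof -
  have fin: "finite {A. grid_antichain k m A}"
    by (rule finite_subset[of _ "Pow (grid k m)"]) (auto simp: grid_antichain_def finite_grid)
  have ne: "{A. grid_antichain k m A} \<noteq> {}" by (auto simp: grid_antichain_def intro!: exI[of _ "{}"])
  show ?thesis unfolding grid_width_def using fin ne sperner by (auto intro!: Max.boundedI)
qed

lemma antichain_le_width: "grid_antichain k m A \<Longrightarrow> card A \<le> grid_width k m"
proof -
  assume a: "grid_antichain k m A"
  have fin: "finite {A. grid_antichain k m A}"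
    by (rule finite_subset[of _ "Pow (grid k m)"]) (auto simp: grid_antichain_def finite_grid)
  show ?thesis unfolding grid_width_def using fin a by (auto intro!: Max_ge)
qed

lemma lev_antichain: "grid_antichain k m (lev k m t)"
proof -
  have "x = y" if "x \<in> lev k m t" "y \<in> lev k m t" "cw_le m x y" for x y
  proof -
    have g: "x \<in> grid k m" "y \<in> grid k m" and r: "rk m x = rk m y" using that by (auto simp: lev_def)
    have le: "\<forall>i<m. x i - 1 \<le> y i - 1" using that(3) by (auto simp: cw_le_def)
    have "\<forall>i<m. x i - 1 = y i - 1"
    proof (rule ccontr)
      assume "\<not> (\<forall>i<m. x i - 1 = y i - 1)"
      then obtain j where j: "j < m" "x j - 1 < y j - 1" using le by (metis le_neq_implies_less)
      have "(\<Sum>i<m. x i - 1) < (\<Sum>i<m. y i - 1)"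
        by (rule sum_strict_mono_ex1) (use le j in auto)
      then show False using r by (simp add: rk_def)
    qed
    moreover have "\<forall>i<m. 1 \<le> x i \<and> 1 \<le> y i" using grid_okg[OF g(1)] grid_okg[OF g(2)] by (auto simp: okg_def)
    ultimately have "\<forall>i<m. x i = y i" by (metis Suc_diff_le diff_Suc_1 le_add_diff_inverse2)
    then show ?thesis using g unfolding grid_def by (intro PiE_ext[of x "{..<m}" _ y]) auto
  qed
  then show ?thesis by (auto simp: grid_antichain_def lev_def)
qed



lemma count_fibers:
  assumes "finite M" "finite Y" "f ` M \<subseteq> Y" "\<And>y. y \<in> Y \<Longrightarrow> card {u\<in>M. f u = y} \<le> w"
  shows "card M \<le> card Y * w"
proof -
  have "M = (\<Union>y\<in>Y. {u\<in>M. f u = y})" using assms(3) by auto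
  then have "card M \<le> (\<Sum>y\<in>Y. card {u\<in>M. f u = y})" by (metis card_UN_le assms(2))
  also have "\<dots> \<le> (\<Sum>y\<in>Y. w)" using assms(4) by (intro sum_mono) auto
  finally show ?thesis by simp
qed

lemma card_PiE_const: "finite J \<Longrightarrow> card (PiE J (\<lambda>_. {1..k::nat})) = k ^ card J"
  by (simp add: card_PiE)

definition shft :: "nat \<Rightarrow> nat \<Rightarrow> (nat \<Rightarrow> nat) \<Rightarrow> (nat \<Rightarrow> nat)" where
  "shft a b u = (\<lambda>i\<in>{..<b}. u (a + i))"

lemma fiber_lemma:
  fixes F :: "(nat \<Rightarrow> nat) set"
  assumes FG: "F \<subseteq> grid k n" and n: "n = a + b"
    and uf: "\<not> (\<exists>u\<in>F. \<exists>v\<in>F. \<exists>w\<in>F. u \<noteq> v \<and> u \<noteq> w \<and> v \<noteq> w \<and> u = join n v w)"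
  shows "card F \<le> k ^ b * grid_width k a + k ^ a * grid_width k b"
proof -
  define I where "I = {..<a}"
  define J where "J = {a..<n}"
  define MI where "MI = {u\<in>F. \<not>(\<exists>v\<in>F. v \<noteq> u \<and> cw_le n v u \<and> (\<forall>i\<in>J. v i = u i))}"
  define MJ where "MJ = {u\<in>F. \<not>(\<exists>v\<in>F. v \<noteq> u \<and> cw_le n v u \<and> (\<forall>i\<in>I. v i = u i))}"
  have finF: "finite F" using FG finite_grid finite_subset by blast
  have ext: "x = y" if "x \<in> grid k n" "y \<in> grid k n" "\<forall>i<n. x i = y i" for x y
    using that unfolding grid_def by (intro PiE_ext[of x "{..<n}" _ y]) auto
  have cover: "F \<subseteq> MI \<union> MJ"
  proof
    fix u assume uF: "u \<in> F"
    show "u \<in> MI \<union> MJ"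
    proof (rule ccontr)
      assume "u \<notin> MI \<union> MJ"
      then obtain v w where v: "v \<in> F" "v \<noteq> u" "cw_le n v u" "\<forall>i\<in>J. v i = u i"
        and w: "w \<in> F" "w \<noteq> u" "cw_le n w u" "\<forall>i\<in>I. w i = u i"
        using uF unfolding MI_def MJ_def by blast
      have ug: "u \<in> grid k n" "v \<in> grid k n" "w \<in> grid k n" using uF v w FG by auto
      have vw: "v \<noteq> w"
      proof
        assume "v = w"
        then have "\<forall>i<n. v i = u i" using v(4) w(4) unfolding I_def J_def by auto
        then show False using ext[OF ug(2) ug(1)] v(2) by blast
      qed
      have "join n v w \<in> grid k n" using ug(2,3) by (auto simp: join_def grid_def PiE_iff max_def)
      moreover have "\<forall>i<n. join n v w i = u i"
      proof (intro allI impI)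
        fix i assume i: "i < n"
        show "join n v w i = u i"
        proof (cases "i < a")
          case True then show ?thesis using w(4) v(3) i unfolding I_def cw_le_def join_def by (auto simp: max_def)
        next
          case False then show ?thesis using v(4) w(3) i unfolding J_def cw_le_def join_def by (auto simp: max_def)
        qed
      qed
      ultimately have eq: "u = join n v w" using ext ug(1) by metis
      have ex: "\<exists>u\<in>F. \<exists>v\<in>F. \<exists>w\<in>F. u \<noteq> v \<and> u \<noteq> w \<and> v \<noteq> w \<and> u = join n v w"
        by (rule bexI[of _ u], rule bexI[of _ v], rule bexI[of _ w]) (use uF v w vw eq in auto)
      then show False using uf by simp
    qed
  qed
  have finMI: "finite MI" and finMJ: "finite MJ" using finF by (auto simp: MI_def MJ_def)
  have cMI: "card MI \<le> k ^ b * grid_width k a"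
  proof -
    define Y where "Y = PiE J (\<lambda>_. {1..k})"
    have cY: "card Y = k ^ b" unfolding Y_def J_def using card_PiE_const[of "{a..<n}" k] n by simp
    have fY: "finite Y" unfolding Y_def J_def by (simp add: finite_PiE)
    have img: "(\<lambda>u. restrict u J) ` MI \<subseteq> Y"
      using FG unfolding MI_def Y_def J_def grid_def by (auto simp: PiE_iff)
    have fib: "card {u\<in>MI. restrict u J = y} \<le> grid_width k a" if "y \<in> Y" for y
    proof -
      define G where "G = {u\<in>MI. restrict u J = y}"
      define p where "p u = restrict u I" for u :: "nat \<Rightarrow> nat"
      have Gg: "G \<subseteq> grid k n" using FG by (auto simp: G_def MI_def)
      have agreeJ: "\<forall>i\<in>J. u i = u' i" if "u \<in> G" "u' \<in> G" for u u'
        using that unfolding G_def by (metis (mono_tags, lifting) mem_Collect_eq restrict_apply')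
      have inj: "inj_on p G"
      proof (rule inj_onI)
        fix u u' assume uu: "u \<in> G" "u' \<in> G" "p u = p u'"
        have "\<forall>i<n. u i = u' i"
        proof (intro allI impI)
          fix i assume "i < n"
          show "u i = u' i"
          proof (cases "i < a")
            case True then show ?thesis using fun_cong[OF uu(3), of i] by (simp add: p_def I_def)
          next
            case False then show ?thesis using agreeJ[OF uu(1,2)] \<open>i < n\<close> by (auto simp: J_def)
          qed
        qed
        then show "u = u'" using ext Gg uu by blast
      qed
      have anti: "grid_antichain k a (p ` G)"
      proof -
        have "p u \<in> grid k a" if "u \<in> G" for u
          unfolding p_def I_def grid_def
        proof (rule restrict_PiE_iff[THEN iffD2], intro ballI)
          fix i assume "i \<in> {..<a}"
          then show "u i \<in> {1..k}" using Gg that n by (auto simp: grid_def PiE_iff)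
        qed
        then have "p ` G \<subseteq> grid k a" by auto
        moreover have "x = x'" if xx: "x \<in> p ` G" "x' \<in> p ` G" "cw_le a x x'" for x x'
        proof -
          obtain u where u: "u \<in> G" "x = p u" using xx by blast
          obtain u' where u': "u' \<in> G" "x' = p u'" using xx by blast
          have "cw_le n u u'"
            unfolding cw_le_def
          proof (intro allI impI)
            fix i assume "i < n"
            show "u i \<le> u' i"
            proof (cases "i < a")
              case True then show ?thesis using xx(3) u u' by (simp add: cw_le_def p_def I_def)
            next
              case False then show ?thesis using agreeJ[OF u(1) u'(1)] \<open>i < n\<close> by (auto simp: J_def)
            qed
          qed
          moreover have "u \<in> F" "u' \<in> MI" using u u' by (auto simp: G_def MI_def)
          ultimately have "u = u'" using agreeJ[OF u(1) u'(1)] unfolding MI_def by auto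
          then show ?thesis using u u' by simp
        qed
        ultimately show ?thesis by (auto simp: grid_antichain_def)
      qed
      have "card G = card (p ` G)" using inj by (simp add: card_image)
      also have "\<dots> \<le> grid_width k a" using antichain_le_width[OF anti] .
      finally show ?thesis by (simp add: G_def)
    qed
    have "card MI \<le> card Y * grid_width k a" by (rule count_fibers[OF finMI fY img fib])
    then show ?thesis using cY by simp
  qed
  have cMJ: "card MJ \<le> k ^ a * grid_width k b"
  proof -
    define Y where "Y = PiE I (\<lambda>_. {1..k})"
    have cY: "card Y = k ^ a" unfolding Y_def I_def using card_PiE_const[of "{..<a}" k] by simp
    have fY: "finite Y" unfolding Y_def I_def by (simp add: finite_PiE)
    have img: "(\<lambda>u. restrict u I) ` MJ \<subseteq> Y"
    proof (rule image_subsetI)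
      fix u assume u: "u \<in> MJ"
      show "restrict u I \<in> Y" unfolding Y_def
      proof (rule restrict_PiE_iff[THEN iffD2], intro ballI)
        fix i assume "i \<in> I"
        then show "u i \<in> {1..k}" using FG u n by (auto simp: grid_def PiE_iff MJ_def I_def)
      qed
    qed
    have fib: "card {u\<in>MJ. restrict u I = y} \<le> grid_width k b" if "y \<in> Y" for y
    proof -
      define G where "G = {u\<in>MJ. restrict u I = y}"
      define p where "p u = shft a b u" for u :: "nat \<Rightarrow> nat"
      have Gg: "G \<subseteq> grid k n" using FG by (auto simp: G_def MJ_def)
      have agreeI: "\<forall>i\<in>I. u i = u' i" if "u \<in> G" "u' \<in> G" for u u'
        using that unfolding G_def by (metis (mono_tags, lifting) mem_Collect_eq restrict_apply')
      have inj: "inj_on p G"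
      proof (rule inj_onI)
        fix u u' assume uu: "u \<in> G" "u' \<in> G" "p u = p u'"
        have "\<forall>i<n. u i = u' i"
        proof (intro allI impI)
          fix i assume "i < n"
          show "u i = u' i"
          proof (cases "i < a")
            case True then show ?thesis using agreeI[OF uu(1,2)] by (auto simp: I_def)
          next
            case False
            then have "i - a < b" "a + (i - a) = i" using \<open>i < n\<close> n by auto
            then show ?thesis using fun_cong[OF uu(3), of "i - a"] by (simp add: p_def shft_def)
          qed
        qed
        then show "u = u'" using ext Gg uu by blast
      qed
      have anti: "grid_antichain k b (p ` G)"
      proof -
        have "p u \<in> grid k b" if "u \<in> G" for u
          unfolding p_def shft_def grid_def
        proof (rule restrict_PiE_iff[THEN iffD2], intro ballI)
          fix i assume "i \<in> {..<b}"
          then show "u (a + i) \<in> {1..k}" using Gg that n by (auto simp: grid_def PiE_iff)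
        qed
        then have "p ` G \<subseteq> grid k b" by auto
        moreover have "x = x'" if xx: "x \<in> p ` G" "x' \<in> p ` G" "cw_le b x x'" for x x'
        proof -
          obtain u where u: "u \<in> G" "x = p u" using xx by blast
          obtain u' where u': "u' \<in> G" "x' = p u'" using xx by blast
          have "cw_le n u u'"
            unfolding cw_le_def
          proof (intro allI impI)
            fix i assume "i < n"
            show "u i \<le> u' i"
            proof (cases "i < a")
              case True then show ?thesis using agreeI[OF u(1) u'(1)] by (auto simp: I_def)
            next
              case False
              then have "i - a < b" "a + (i - a) = i" using \<open>i < n\<close> n by auto
              then show ?thesis using xx(3) u u' unfolding cw_le_def p_def shft_def by (metis restrict_apply' lessThan_iff)
            qed
          qed
          moreover have "u \<in> F" "u' \<in> MJ" using u u' by (auto simp: G_def MJ_def)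
          ultimately have "u = u'" using agreeI[OF u(1) u'(1)] unfolding MJ_def by auto
          then show ?thesis using u u' by simp
        qed
        ultimately show ?thesis by (auto simp: grid_antichain_def)
      qed
      have "card G = card (p ` G)" using inj by (simp add: card_image)
      also have "\<dots> \<le> grid_width k b" using antichain_le_width[OF anti] .
      finally show ?thesis by (simp add: G_def)
    qed
    have "card MJ \<le> card Y * grid_width k b" by (rule count_fibers[OF finMJ fY img fib])
    then show ?thesis using cY by simp
  qed
  have "card F \<le> card (MI \<union> MJ)" using cover finMI finMJ by (intro card_mono) auto
  also have "\<dots> \<le> card MI + card MJ" by (rule card_Un_le)
  finally show ?thesis using cMI cMJ by linarith
qed



lemma grid_Suc: "grid k (Suc m) = (\<lambda>(j, g). g(m := j)) ` ({1..k} \<times> grid k m)"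
  unfolding grid_def lessThan_Suc by (rule PiE_insert_eq)

lemma grid_Suc_inj: "inj_on (\<lambda>(j, g). g(m := j)) ({1..k} \<times> grid k m)"
  unfolding grid_def by (rule inj_combinator) simp

lemma sum_grid_Suc: "(\<Sum>x\<in>grid k (Suc m). f x) = (\<Sum>j\<in>{1..k}. \<Sum>y\<in>grid k m. f (y(m := j)))"
proof -
  have "(\<Sum>x\<in>grid k (Suc m). f x) = (\<Sum>p\<in>{1..k} \<times> grid k m. f ((\<lambda>(j, g). g(m := j)) p))"
    unfolding grid_Suc by (rule sum.reindex[OF grid_Suc_inj, unfolded comp_def])
  also have "\<dots> = (\<Sum>j\<in>{1..k}. \<Sum>y\<in>grid k m. f (y(m := j)))"
    unfolding sum.cartesian_product by (intro sum.cong) auto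
  finally show ?thesis .
qed

lemma rk_upd: "rk (Suc m) (y(m := j)) = rk m y + (j - 1)"
proof -
  have "rk m (y(m := j)) = rk m y" unfolding rk_def by (intro sum.cong) auto
  then show ?thesis by (simp add: rk_Suc)
qed

lemma sumA: "(\<Sum>j\<in>{1..k}. real j) = real k * (real k + 1) / 2"
  by (induction k) (auto simp: algebra_simps add_divide_distrib)

lemma sumB: "(\<Sum>j\<in>{1..k}. real j ^ 2) = real k * (real k + 1) * (2 * real k + 1) / 6"
  by (induction k) (auto simp: algebra_simps power2_eq_square add_divide_distrib)

lemma sumj: "(\<Sum>j\<in>{1..k}. (2 * real j - real k - 1)) = 0"
proof -
  have "(\<Sum>j\<in>{1..k}. (2 * real j - real k - 1)) = (\<Sum>j\<in>{1..k}. 2 * real j - (real k + 1))"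
    by (simp add: algebra_simps)
  also have "\<dots> = (\<Sum>j\<in>{1..k}. 2 * real j) - (\<Sum>j\<in>{1..k}. real k + 1)"
    by (rule sum_subtractf)
  also have "\<dots> = 2 * (\<Sum>j\<in>{1..k}. real j) - real k * (real k + 1)"
    by (simp add: sum_distrib_left[symmetric])
  also have "\<dots> = 0" unfolding sumA by simp
  finally show ?thesis .
qed

lemma sumj2: "(\<Sum>j\<in>{1..k}. (2 * real j - real k - 1)^2) = real k * (real k ^ 2 - 1) / 3"
proof -
  have "(\<Sum>j\<in>{1..k}. (2 * real j - real k - 1)^2) =
        (\<Sum>j\<in>{1..k}. 4 * real j ^ 2 - 4 * (real k + 1) * real j + (real k + 1)^2)"
    by (intro sum.cong) (auto simp: power2_eq_square algebra_simps)
  also have "\<dots> = 4 * (\<Sum>j\<in>{1..k}. real j ^ 2) - 4 * (real k + 1) * (\<Sum>j\<in>{1..k}. real j) + real k * (real k + 1)^2"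
    by (simp add: sum.distrib sum_subtractf sum_distrib_left)
  also have "\<dots> = real k * (real k ^ 2 - 1) / 3"
    unfolding sumA sumB by (simp add: field_simps power2_eq_square)
  finally show ?thesis .
qed

definition Dv :: "nat \<Rightarrow> nat \<Rightarrow> (nat \<Rightarrow> nat) \<Rightarrow> real" where
  "Dv k m x = 2 * real (rk m x) - real m * (real k - 1)"

lemma card_grid: "card (grid k m) = k ^ m"
  unfolding grid_def by (simp add: card_PiE)

lemma var_grid:
  assumes k: "k \<ge> 1"
  shows "(\<Sum>x\<in>grid k m. Dv k m x ^ 2) = real k ^ m * real m * (real k ^ 2 - 1) / 3"
proof (induction m)
  case 0
  have "grid k 0 = {\<lambda>_. undefined}" by (simp add: grid_def)
  then show ?case by (simp add: Dv_def rk_def)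
next
  case (Suc m)
  have e: "Dv k (Suc m) (y(m := j)) = Dv k m y + (2 * real j - real k - 1)" if "j \<in> {1..k}" for y j
    using that unfolding Dv_def rk_upd by (simp add: of_nat_diff algebra_simps)
  define e where "e j = 2 * real j - real k - 1" for j
  define S where "S = (\<Sum>y\<in>grid k m. Dv k m y)"
  have se: "(\<Sum>j\<in>{1..k}. e j) = 0" unfolding e_def by (rule sumj)
  have se2: "(\<Sum>j\<in>{1..k}. e j ^ 2) = real k * (real k ^ 2 - 1) / 3" unfolding e_def by (rule sumj2)
  have "(\<Sum>x\<in>grid k (Suc m). Dv k (Suc m) x ^ 2) = (\<Sum>j\<in>{1..k}. \<Sum>y\<in>grid k m. (Dv k m y + e j) ^ 2)"
    unfolding sum_grid_Suc e_def by (intro sum.cong refl) (simp add: e)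
  also have "\<dots> = (\<Sum>j\<in>{1..k}. \<Sum>y\<in>grid k m. Dv k m y ^ 2 + 2 * e j * Dv k m y + e j ^ 2)"
    by (intro sum.cong refl) (simp add: power2_eq_square algebra_simps)
  also have "\<dots> = (\<Sum>j\<in>{1..k}. (\<Sum>y\<in>grid k m. Dv k m y ^ 2) + 2 * e j * S + real (card (grid k m)) * e j ^ 2)"
    by (intro sum.cong refl) (simp add: sum.distrib sum_distrib_left S_def)
  also have "\<dots> = real k * (\<Sum>y\<in>grid k m. Dv k m y ^ 2) + 2 * S * (\<Sum>j\<in>{1..k}. e j) + real (card (grid k m)) * (\<Sum>j\<in>{1..k}. e j ^ 2)"
  proof -
    have "(\<Sum>j\<in>{1..k}. (\<Sum>y\<in>grid k m. Dv k m y ^ 2) + 2 * e j * S + real (card (grid k m)) * e j ^ 2)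
      = (\<Sum>j\<in>{1..k}. (\<Sum>y\<in>grid k m. Dv k m y ^ 2)) + (\<Sum>j\<in>{1..k}. (2 * S) * e j) + (\<Sum>j\<in>{1..k}. real (card (grid k m)) * e j ^ 2)"
      by (simp add: sum.distrib mult.commute mult.left_commute)
    also have "\<dots> = real k * (\<Sum>y\<in>grid k m. Dv k m y ^ 2) + 2 * S * (\<Sum>j\<in>{1..k}. e j) + real (card (grid k m)) * (\<Sum>j\<in>{1..k}. e j ^ 2)"
      by (simp only: sum_distrib_left[symmetric]) simp
    finally show ?thesis .
  qed
  also have "\<dots> = real k ^ Suc m * real (Suc m) * (real k ^ 2 - 1) / 3"
    unfolding se se2 Suc card_grid by (simp add: field_simps power2_eq_square)
  finally show ?case .
qed

lemma big_level:
  assumes k: "k \<ge> 2" and m: "m \<ge> 1"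
  shows "\<exists>t. real k ^ m \<le> 4 * real k * sqrt (real m) * real (card (lev k m t))"
proof -
  define T where "T = 2 * real m * (real k ^ 2 - 1) / 3"
  have k2: "(2::real) \<le> real k" using k by simp
  have kk: "real k ^ 2 \<ge> 4" using power_mono[OF k2, of 2] by simp
  have Tpos: "T > 0" using kk m unfolding T_def by (simp add: field_simps)
  define Bad where "Bad = {x\<in>grid k m. Dv k m x ^ 2 > T}"
  define Good where "Good = {x\<in>grid k m. Dv k m x ^ 2 \<le> T}"
  have fin: "finite (grid k m)" by (rule finite_grid)
  have "real (card Bad) * T = (\<Sum>x\<in>Bad. T)" by simp
  also have "\<dots> \<le> (\<Sum>x\<in>Bad. Dv k m x ^ 2)" by (intro sum_mono) (auto simp: Bad_def)
  also have "\<dots> \<le> (\<Sum>x\<in>grid k m. Dv k m x ^ 2)"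
    by (intro sum_mono2 fin) (auto simp: Bad_def)
  also have "\<dots> = real k ^ m * T / 2" using var_grid[of k m] k by (simp add: T_def)
  finally have "real (card Bad) * T \<le> real k ^ m * T / 2" .
  then have cB: "real (card Bad) \<le> real k ^ m / 2" using Tpos by (simp add: field_simps)
  have "grid k m = Good \<union> Bad" "Good \<inter> Bad = {}" by (auto simp: Good_def Bad_def)
  then have "card (grid k m) = card Good + card Bad"
    using fin by (metis card_Un_disjoint finite_Un)
  then have "real k ^ m = real (card Good) + real (card Bad)" using card_grid[of k m] by (metis of_nat_add of_nat_power)
  then have cG: "real (card Good) \<ge> real k ^ m / 2" using cB by linarith
  have finG: "finite Good" using fin by (simp add: Good_def)
  have pos: "real k ^ m > 0" using k by simp
  have neG: "Good \<noteq> {}"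
  proof
    assume "Good = {}"
    then have "real k ^ m / 2 \<le> 0" using cG by simp
    then show False using pos by linarith
  qed
  define Ts where "Ts = rk m ` Good"
  have finT: "finite Ts" and neT: "Ts \<noteq> {}" using finG neG by (auto simp: Ts_def)
  have bnd: "\<bar>2 * real t - real m * (real k - 1)\<bar> \<le> sqrt T" if tt: "t \<in> Ts" for t
  proof -
    obtain x where x: "x \<in> Good" "t = rk m x" using tt by (auto simp: Ts_def)
    have "(2 * real t - real m * (real k - 1)) ^ 2 \<le> T" using x by (simp add: Good_def Dv_def)
    then show ?thesis using real_sqrt_abs real_sqrt_le_mono by fastforce
  qed
  have cT: "real (card Ts) \<le> sqrt T + 1"
  proof -
    have "Ts \<subseteq> {Min Ts..Max Ts}" using finT by auto
    then have "card Ts \<le> card {Min Ts..Max Ts}" by (intro card_mono) auto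
    also have "\<dots> = Max Ts + 1 - Min Ts" by simp
    finally have c: "real (card Ts) \<le> real (Max Ts) + 1 - real (Min Ts)"
      using Min_le[OF finT, of "Max Ts"] Max_in[OF finT neT] by linarith
    have "\<bar>2 * real (Max Ts) - real m * (real k - 1)\<bar> \<le> sqrt T" by (rule bnd[OF Max_in[OF finT neT]])
    moreover have "\<bar>2 * real (Min Ts) - real m * (real k - 1)\<bar> \<le> sqrt T" by (rule bnd[OF Min_in[OF finT neT]])
    ultimately show ?thesis using c by linarith
  qed
  define mu where "mu = Max ((\<lambda>t. card (lev k m t)) ` Ts)"
  have "mu \<in> (\<lambda>t. card (lev k m t)) ` Ts" unfolding mu_def using finT neT by (intro Max_in) auto
  then obtain t0 where t0a: "t0 \<in> Ts" "card (lev k m t0) = mu" by auto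
  have t0: "t0 \<in> Ts" "\<forall>t\<in>Ts. card (lev k m t) \<le> card (lev k m t0)"
    using t0a finT unfolding mu_def by auto
  have "Good \<subseteq> (\<Union>t\<in>Ts. lev k m t)" by (auto simp: Ts_def Good_def lev_def)
  then have "card Good \<le> card (\<Union>t\<in>Ts. lev k m t)"
    using finT by (intro card_mono) (auto simp: lev_def finite_grid)
  also have "\<dots> \<le> (\<Sum>t\<in>Ts. card (lev k m t))" by (rule card_UN_le[OF finT])
  also have "\<dots> \<le> (\<Sum>t\<in>Ts. card (lev k m t0))" using t0 by (intro sum_mono) auto
  also have "\<dots> = card Ts * card (lev k m t0)" by simp
  finally have "real (card Good) \<le> real (card Ts) * real (card (lev k m t0))" by (simp flip: of_nat_mult)
  also have "\<dots> \<le> (sqrt T + 1) * real (card (lev k m t0))" using cT by (intro mult_right_mono) auto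
  finally have A: "real k ^ m / 2 \<le> (sqrt T + 1) * real (card (lev k m t0))" using cG by linarith
  have "T \<le> (real k * sqrt (real m)) ^ 2" using m unfolding T_def by (simp add: power_mult_distrib field_simps)
  then have sT: "sqrt T \<le> real k * sqrt (real m)" using real_sqrt_le_mono by fastforce
  have s1: "1 \<le> sqrt (real m)" using m by simp
  have one: "1 \<le> real k * sqrt (real m)" using mult_mono[of 1 "real k" 1 "sqrt (real m)"] k2 s1 by simp
  have "(sqrt T + 1) * real (card (lev k m t0)) \<le> (2 * real k * sqrt (real m)) * real (card (lev k m t0))"
    using sT one by (intro mult_right_mono) auto
  with A have "real k ^ m \<le> 4 * real k * sqrt (real m) * real (card (lev k m t0))" by linarith
  then show ?thesis by blast
qed



definition PP :: "nat \<Rightarrow> nat poly" where "PP k = (\<Sum>j<k. monom 1 j)"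

lemma coeff_PP: "coeff (PP k) s = (if s < k then 1 else 0)"
  unfolding PP_def coeff_sum coeff_monom by (simp add: sum.delta')

lemma poly_PP: "poly (PP k) 1 = k"
  unfolding PP_def poly_sum poly_monom by simp

lemma card_filter_sum: "finite A \<Longrightarrow> card {x\<in>A. P x} = (\<Sum>x\<in>A. if P x then 1 else 0)"
  by (simp add: sum.If_cases Int_def)

lemma lev_coeff: "card (lev k m t) = coeff (PP k ^ m) t"
proof (induction m arbitrary: t)
  case 0
  have "grid k 0 = {\<lambda>_. undefined}" by (simp add: grid_def)
  then show ?case by (simp add: lev_def rk_def)
next
  case (Suc m)
  have "card (lev k (Suc m) t) = (\<Sum>x\<in>grid k (Suc m). if rk (Suc m) x = t then 1 else 0)"
    unfolding lev_def by (rule card_filter_sum[OF finite_grid])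
  also have "\<dots> = (\<Sum>j\<in>{1..k}. \<Sum>y\<in>grid k m. if rk m y + (j - 1) = t then 1 else 0)"
    unfolding sum_grid_Suc rk_upd ..
  also have "\<dots> = (\<Sum>j\<in>{1..k}. if j - 1 \<le> t then coeff (PP k ^ m) (t - (j - 1)) else 0)"
  proof (intro sum.cong refl)
    fix j assume "j \<in> {1..k}"
    show "(\<Sum>y\<in>grid k m. if rk m y + (j - 1) = t then 1 else 0) = (if j - 1 \<le> t then coeff (PP k ^ m) (t - (j - 1)) else 0)"
    proof (cases "j - 1 \<le> t")
      case True
      have "(\<Sum>y\<in>grid k m. if rk m y + (j - 1) = t then 1 else (0::nat)) = (\<Sum>y\<in>grid k m. if rk m y = t - (j - 1) then 1 else 0)"
        using True by (intro sum.cong refl) auto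
      also have "\<dots> = card (lev k m (t - (j - 1)))" unfolding lev_def by (rule card_filter_sum[OF finite_grid, symmetric])
      finally show ?thesis using True Suc by simp
    next
      case False
      then show ?thesis by (intro trans[OF sum.neutral]) auto
    qed
  qed
  also have "\<dots> = (\<Sum>i\<le>t. if t - i < k then coeff (PP k ^ m) i else 0)"
  proof -
    have "(\<Sum>j\<in>{1..k}. if j - 1 \<le> t then coeff (PP k ^ m) (t - (j - 1)) else 0)
        = (\<Sum>j\<in>{j\<in>{1..k}. j - 1 \<le> t}. coeff (PP k ^ m) (t - (j - 1)))"
      by (rule sum.inter_filter[symmetric]) simp
    also have "\<dots> = (\<Sum>i\<in>{i\<in>{..t}. t - i < k}. coeff (PP k ^ m) i)"
    proof (rule sum.reindex_bij_witness[of _ "\<lambda>i. t - i + 1" "\<lambda>j. t - (j - 1)"])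
    qed auto
    also have "\<dots> = (\<Sum>i\<le>t. if t - i < k then coeff (PP k ^ m) i else 0)"
      by (rule sum.inter_filter) simp
    finally show ?thesis .
  qed
  also have "\<dots> = coeff (PP k ^ m * PP k) t"
    unfolding coeff_mult coeff_PP by (intro sum.cong) auto
  finally show ?case by (simp only: power_Suc2)
qed

lemma PP_double: "PP (2*d) = PP d * (1 + monom 1 d)"
proof -
  have u: "{..<2*d} = {..<d} \<union> {d..<d+d}" by auto
  have "PP (2*d) = (\<Sum>j\<in>{..<d} \<union> {d..<d+d}. monom 1 j)" unfolding PP_def u ..
  also have "\<dots> = (\<Sum>j<d. monom 1 j) + (\<Sum>j\<in>{d..<d+d}. monom 1 j)"
    by (rule sum.union_disjoint) auto
  also have "(\<Sum>j\<in>{d..<d+d}. monom 1 j) = (\<Sum>j\<in>{0..<d}. monom (1::nat) (j + d))"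
    using sum.shift_bounds_nat_ivl[of "monom (1::nat)" 0 d d] by simp
  also have "\<dots> = (\<Sum>j<d. monom 1 j) * monom 1 d"
    by (simp add: sum_distrib_right mult_monom atLeast0LessThan)
  finally show ?thesis unfolding PP_def by (simp add: algebra_simps)
qed

lemma coeff_binpow:
  assumes d: "d \<ge> 1"
  shows "coeff ((1 + monom (1::nat) d) ^ p) s \<le> (if d dvd s then p choose (p div 2) else 0)"
proof -
  have "(monom (1::nat) d + 1) ^ p = (\<Sum>q\<le>p. of_nat (p choose q) * monom 1 d ^ q * 1 ^ (p - q))"
    by (rule binomial_ring)
  then have e: "(1 + monom (1::nat) d) ^ p = (\<Sum>q\<le>p. monom (p choose q) (d * q))"
    by (simp add: monom_power add.commute of_nat_monom mult_monom)
  have "coeff ((1 + monom (1::nat) d) ^ p) s = (\<Sum>q\<le>p. if q = s div d \<and> d dvd s then p choose q else 0)"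
    unfolding e coeff_sum coeff_monom using d
    by (intro sum.cong refl) (auto simp: dvd_def)
  also have "\<dots> \<le> (if d dvd s then p choose (p div 2) else 0)"
    by (auto simp: sum.delta' binomial_maximum)
  finally show ?thesis .
qed

lemma coeff_sum_le: "(\<Sum>u\<le>N. coeff (PP d ^ q) u) \<le> d ^ q"
proof -
  define R where "R = PP d ^ q"
  have "(\<Sum>u\<le>N. coeff R u) \<le> (\<Sum>u\<le>N + degree R. coeff R u)" by (intro sum_mono2) auto
  also have "\<dots> = (\<Sum>u\<le>degree R. coeff R u)"
    by (rule sum.mono_neutral_right) (auto simp: coeff_eq_0)
  also have "\<dots> = poly R 1" by (simp add: poly_altdef)
  also have "\<dots> = d ^ q" unfolding R_def poly_power poly_PP ..
  finally show ?thesis by (simp add: R_def)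
qed

lemma residue_sum:
  assumes d: "d \<ge> 1" and p: "p \<ge> 1"
  shows "(\<Sum>i\<le>t. if d dvd (t - i) then coeff (PP d ^ p) i else 0) \<le> d ^ (p - 1)"
proof -
  define Q where "Q = PP d ^ (p - 1)"
  obtain p' where p': "p = Suc p'" using p by (cases p) auto
  have PQ: "PP d ^ p = Q * PP d" unfolding Q_def p' by (simp only: power_Suc2 diff_Suc_1)
  have ci: "coeff (PP d ^ p) i = (\<Sum>u\<le>t. if u \<le> i \<and> i - u < d then coeff Q u else 0)" if "i \<le> t" for i
  proof -
    have "coeff (PP d ^ p) i = (\<Sum>u\<le>i. if i - u < d then coeff Q u else 0)"
      unfolding PQ coeff_mult coeff_PP by (intro sum.cong) auto
    also have "\<dots> = (\<Sum>u\<le>t. if u \<le> i \<and> i - u < d then coeff Q u else 0)"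
      using that by (intro sum.mono_neutral_cong_left) auto
    finally show ?thesis .
  qed
  have "(\<Sum>i\<le>t. if d dvd (t - i) then coeff (PP d ^ p) i else 0)
      = (\<Sum>i\<le>t. \<Sum>u\<le>t. if d dvd (t - i) \<and> u \<le> i \<and> i - u < d then coeff Q u else 0)"
    by (intro sum.cong refl) (auto simp: ci intro: sum.neutral)
  also have "\<dots> = (\<Sum>u\<le>t. \<Sum>i\<le>t. if d dvd (t - i) \<and> u \<le> i \<and> i - u < d then coeff Q u else 0)"
    by (rule sum.swap)
  also have "\<dots> \<le> (\<Sum>u\<le>t. coeff Q u)"
  proof (intro sum_mono)
    fix u assume "u \<in> {..t}"
    define S where "S = {i\<in>{..t}. d dvd (t - i) \<and> u \<le> i \<and> i - u < d}"
    have "(\<Sum>i\<le>t. if d dvd (t - i) \<and> u \<le> i \<and> i - u < d then coeff Q u else 0) = card S * coeff Q u"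
      unfolding S_def by (simp add: sum.If_cases Int_def)
    moreover have "card S \<le> 1"
    proof -
      have finS: "finite S" by (simp add: S_def)
      have eq: "i = i'" if ii: "i \<in> S" "i' \<in> S" "i \<le> i'" for i i'
      proof (rule ccontr)
        assume ne: "i \<noteq> i'"
        have "d dvd (t - i) - (t - i')" by (rule dvd_diff_nat) (use ii in \<open>auto simp: S_def\<close>)
        moreover have "(t - i) - (t - i') = i' - i" using ii by (auto simp: S_def)
        ultimately have dv: "d dvd i' - i" by simp
        have "0 < i' - i" using ii(3) ne by simp
        then have "d \<le> i' - i" using dv dvd_imp_le by blast
        moreover have "i' - i < d" using ii by (auto simp: S_def)
        ultimately show False by simp
      qed
      have "\<forall>i\<in>S. \<forall>i'\<in>S. i = i'"
      proof (intro ballI)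
        fix i i' assume "i \<in> S" "i' \<in> S"
        then show "i = i'" using eq[of i i'] eq[of i' i] by (cases "i \<le> i'") auto
      qed
      then show ?thesis using card_le_Suc0_iff_eq[OF finS] by simp
    qed
    ultimately show "(\<Sum>i\<le>t. if d dvd (t - i) \<and> u \<le> i \<and> i - u < d then coeff Q u else 0) \<le> coeff Q u"
      using mult_right_mono[of "card S" 1 "coeff Q u"] by simp
  qed
  also have "\<dots> \<le> d ^ (p - 1)" unfolding Q_def by (rule coeff_sum_le)
  finally show ?thesis .
qed

lemma even_bound:
  assumes d: "d \<ge> 1" and p: "p \<ge> 1"
  shows "coeff (PP (2*d) ^ p) t \<le> d ^ (p - 1) * (p choose (p div 2))"
proof -
  define B where "B = p choose (p div 2)"
  have "coeff (PP (2*d) ^ p) t = (\<Sum>i\<le>t. coeff (PP d ^ p) i * coeff ((1 + monom 1 d) ^ p) (t - i))"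
    unfolding PP_double power_mult_distrib coeff_mult ..
  also have "\<dots> \<le> (\<Sum>i\<le>t. B * (if d dvd (t - i) then coeff (PP d ^ p) i else 0))"
  proof (intro sum_mono)
    fix i
    have cb: "coeff ((1 + monom 1 d) ^ p) (t - i) \<le> (if d dvd (t - i) then B else 0)"
      using coeff_binpow[OF d, of p "t - i"] unfolding B_def .
    show "coeff (PP d ^ p) i * coeff ((1 + monom 1 d) ^ p) (t - i) \<le> B * (if d dvd (t - i) then coeff (PP d ^ p) i else 0)"
    proof (cases "d dvd (t - i)")
      case True
      then show ?thesis using cb mult_left_mono[of "coeff ((1 + monom 1 d) ^ p) (t - i)" B "coeff (PP d ^ p) i"]
        by (simp add: mult.commute)
    next
      case False
      then show ?thesis using cb by simp
    qed
  qed
  also have "\<dots> = B * (\<Sum>i\<le>t. if d dvd (t - i) then coeff (PP d ^ p) i else 0)"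
    by (simp add: sum_distrib_left)
  also have "\<dots> \<le> B * d ^ (p - 1)" using residue_sum[OF d p] by simp
  finally show ?thesis by (simp add: B_def mult.commute)
qed

lemma coeff_le_total: "coeff (PP d ^ q) t \<le> d ^ q"
proof -
  have "coeff (PP d ^ q) t \<le> (\<Sum>u\<le>t. coeff (PP d ^ q) u)" by (rule member_le_sum) auto
  then show ?thesis using coeff_sum_le[where N=t and d=d and q=q] by linarith
qed



declare binomial_Suc_Suc [simp del]

lemma cb_odd: "(2*q+1 choose q) * Suc q = (2*q+1) * (2*q choose q)"
proof -
  have S2: "Suc (2*q) * (2*q choose q) = (Suc (2*q) choose Suc q) * Suc q"
    by (rule Suc_times_binomial_eq)
  have sym: "(Suc (2*q) choose Suc q) = (2*q+1 choose q)"
    using binomial_symmetric[of "Suc q" "Suc (2*q)"] by simp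
  show ?thesis using S2 sym by simp
qed

lemma cb_rec: "(2*Suc q choose Suc q) * Suc q = 2 * (2*q+1) * (2*q choose q)"
proof -
  have S1: "Suc (2*q+1) * (2*q+1 choose q) = (Suc (2*q+1) choose Suc q) * Suc q"
    by (rule Suc_times_binomial_eq)
  have "(2*Suc q choose Suc q) * Suc q = Suc (2*q+1) * (2*q+1 choose q)" using S1 by simp
  also have "\<dots> = 2 * ((2*q+1 choose q) * Suc q)" by simp
  also have "\<dots> = 2 * ((2*q+1) * (2*q choose q))" using cb_odd[of q] by simp
  finally show ?thesis by simp
qed

lemma cb_even: "real (2*q choose q) ^ 2 * (3 * real q + 1) \<le> 16 ^ q"
proof (induction q)
  case 0 then show ?case by simp
next
  case (Suc q)
  define c where "c = real (2*q choose q)"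
  define c' where "c' = real (2*Suc q choose Suc q)"
  have r: "c' * (real q + 1) = 2 * (2 * real q + 1) * c"
    using arg_cong[OF cb_rec[of q], of real] unfolding c_def c'_def by (simp add: algebra_simps)
  have c0: "c \<ge> 0" by (simp add: c_def)
  have poly: "(2 * real q + 1)^2 * (3 * real q + 4) \<le> 4 * (real q + 1)^2 * (3 * real q + 1)"
    by (simp add: power2_eq_square algebra_simps)
  have "c'^2 * (3 * real (Suc q) + 1) * (real q + 1)^2 = (c' * (real q + 1))^2 * (3 * real q + 4)"
    by (simp add: power2_eq_square algebra_simps)
  also have "\<dots> = 4 * c^2 * ((2 * real q + 1)^2 * (3 * real q + 4))" unfolding r by (simp add: power2_eq_square algebra_simps)
  also have "\<dots> \<le> 4 * c^2 * (4 * (real q + 1)^2 * (3 * real q + 1))"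
    by (rule mult_left_mono[OF poly]) simp
  also have "\<dots> = 16 * (c^2 * (3 * real q + 1)) * (real q + 1)^2" by (simp add: algebra_simps)
  also have "\<dots> \<le> 16 * 16^q * (real q + 1)^2"
    using Suc.IH unfolding c_def by (intro mult_right_mono) auto
  finally have "c'^2 * (3 * real (Suc q) + 1) * (real q + 1)^2 \<le> 16 ^ Suc q * (real q + 1)^2" by simp
  then show ?case unfolding c'_def by (smt (verit) mult_right_le_imp_le zero_less_power2 of_nat_0_le_iff)
qed

lemma cb_bound: "real (p choose (p div 2)) ^ 2 * (real p + 1) \<le> 2 * 4 ^ p"
proof (cases "even p")
  case True
  then obtain q where q: "p = 2*q" by auto
  have le: "real (2*q) + 1 \<le> 2 * (3 * real q + 1)" by simp
  have "real (2*q choose q) ^ 2 * (real (2*q) + 1) \<le> real (2*q choose q) ^ 2 * (2 * (3 * real q + 1))"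
    by (rule mult_left_mono[OF le]) simp
  also have "\<dots> = 2 * (real (2*q choose q) ^ 2 * (3 * real q + 1))" by simp
  also have "\<dots> \<le> 2 * 16 ^ q" using cb_even[of q] by simp
  also have "\<dots> = 2 * 4 ^ (2*q)" by (simp add: power_mult)
  finally show ?thesis using q by simp
next
  case False
  then obtain q where q: "p = 2*q+1" using oddE by blast
  have pd: "p div 2 = q" using q by simp
  define c where "c = real (2*q choose q)"
  define b where "b = real (2*q+1 choose q)"
  have e: "b * (real q + 1) = (2 * real q + 1) * c" using arg_cong[OF cb_odd[of q], of real] unfolding b_def c_def by (simp add: algebra_simps)
  have c0: "c \<ge> 0" by (simp add: c_def)
  have "b * (real q + 1) \<le> (2 * c) * (real q + 1)" using e c0 by (simp add: algebra_simps)
  then have b2: "b \<le> 2 * c" by (smt (verit) mult_right_le_imp_le of_nat_0_le_iff)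
  have b0: "b \<ge> 0" by (simp add: b_def)
  have "b^2 * (real p + 1) \<le> (2*c)^2 * (real p + 1)"
    using b2 b0 by (intro mult_right_mono power_mono) auto
  also have "\<dots> = 8 * (c^2 * (real q + 1))" using q by (simp add: power2_eq_square algebra_simps)
  also have "\<dots> \<le> 8 * (c^2 * (3 * real q + 1))" by (intro mult_left_mono) auto
  also have "\<dots> \<le> 8 * 16 ^ q" using cb_even[of q] unfolding c_def by simp
  also have "\<dots> = 2 * 4 ^ p" using q by (simp add: power_mult power_add)
  finally show ?thesis unfolding b_def pd using q by simp
qed

lemma B_sqrt: "real (p choose (p div 2)) * sqrt (real p + 1) \<le> sqrt 2 * 2 ^ p"
proof -
  have "real (p choose (p div 2)) * sqrt (real p + 1) = sqrt (real (p choose (p div 2)) ^ 2 * (real p + 1))"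
    by (simp add: real_sqrt_mult)
  also have "\<dots> \<le> sqrt (2 * 4 ^ p)" using cb_bound[of p] by (rule real_sqrt_le_mono)
  also have "\<dots> = sqrt 2 * 2 ^ p"
    by (simp add: real_sqrt_mult power_mult_distrib[symmetric] real_sqrt_power flip: power_mult)
  finally show ?thesis .
qed

lemma PP_odd: "PP (2*d+1) = monom 1 (2*d) + PP (2*d)"
  unfolding PP_def by (simp add: add.commute)

lemma odd_expand:
  assumes M: "\<And>p s. coeff (PP (2*d) ^ p) s \<le> M p"
  shows "coeff (PP (2*d+1) ^ m) t \<le> (\<Sum>q\<le>m. (m choose q) * M (m - q))"
proof -
  have "(monom 1 (2*d) + PP (2*d)) ^ m = (\<Sum>q\<le>m. of_nat (m choose q) * monom 1 (2*d) ^ q * PP (2*d) ^ (m - q))"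
    by (rule binomial_ring)
  also have "\<dots> = (\<Sum>q\<le>m. monom (m choose q) (2*d*q) * PP (2*d) ^ (m - q))"
    by (intro sum.cong refl) (simp add: monom_power of_nat_monom mult_monom)
  finally have e: "PP (2*d+1) ^ m = (\<Sum>q\<le>m. monom (m choose q) (2*d*q) * PP (2*d) ^ (m - q))"
    unfolding PP_odd .
  have "coeff (PP (2*d+1) ^ m) t = (\<Sum>q\<le>m. coeff (monom (m choose q) (2*d*q) * PP (2*d) ^ (m - q)) t)"
    unfolding e coeff_sum ..
  also have "\<dots> \<le> (\<Sum>q\<le>m. (m choose q) * M (m - q))"
  proof (intro sum_mono)
    fix q
    show "coeff (monom (m choose q) (2*d*q) * PP (2*d) ^ (m - q)) t \<le> (m choose q) * M (m - q)"
      unfolding coeff_monom_mult using M by (auto intro: mult_left_mono)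
  qed
  finally show ?thesis .
qed

lemma bern98: "8 ^ n * (real n + 8) \<le> 8 * 9 ^ n"
proof (induction n)
  case 0 then show ?case by simp
next
  case (Suc n)
  have "8 ^ Suc n * (real (Suc n) + 8) = 8 * (8 ^ n * (real n + 9))" by (simp add: algebra_simps)
  also have "\<dots> \<le> 8 * (9 * (8 ^ n * (real n + 8)) / 8)"
  proof -
    have "8 ^ n * (real n + 9) * 8 \<le> 9 * (8 ^ n * (real n + 8))"
      by (simp add: algebra_simps)
    then show ?thesis by (simp add: field_simps)
  qed
  also have "\<dots> \<le> 8 * (9 * (8 * 9 ^ n) / 8)" using Suc.IH by simp
  also have "\<dots> = 8 * 9 ^ Suc n" by simp
  finally show ?case .
qed

lemma E1_even:
  assumes d: "d \<ge> 1" and m: "m \<ge> 1"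
  shows "real (coeff (PP (2*d) ^ m) t) * sqrt (real m + 1) \<le> 2 * sqrt 2 * (2 * real d) ^ (m - 1)"
proof -
  define B where "B = m choose (m div 2)"
  have c: "real (coeff (PP (2*d) ^ m) t) \<le> real d ^ (m - 1) * real B"
    using even_bound[OF d m, of t] unfolding B_def by (metis of_nat_le_iff of_nat_mult of_nat_power)
  have s0: "sqrt (real m + 1) \<ge> 0" by simp
  have "real (coeff (PP (2*d) ^ m) t) * sqrt (real m + 1) \<le> real d ^ (m - 1) * (real B * sqrt (real m + 1))"
    using mult_right_mono[OF c s0] by (simp add: mult.assoc)
  also have "\<dots> \<le> real d ^ (m - 1) * (sqrt 2 * 2 ^ m)"
    using B_sqrt[of m] unfolding B_def by (intro mult_left_mono) auto
  also have "\<dots> = 2 * sqrt 2 * (2 * real d) ^ (m - 1)"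
  proof -
    have "(2::real) ^ m = 2 * 2 ^ (m - 1)" using m by (metis One_nat_def Suc_diff_1 less_le_trans power_Suc zero_less_one)
    then show ?thesis by (simp add: power_mult_distrib)
  qed
  finally show ?thesis .
qed

definition Mb :: "nat \<Rightarrow> nat \<Rightarrow> nat" where
  "Mb d p = (if p = 0 then 1 else d ^ (p - 1) * (p choose (p div 2)))"

lemma Mb_ok: "d \<ge> 1 \<Longrightarrow> coeff (PP (2*d) ^ p) s \<le> Mb d p"
  unfolding Mb_def using even_bound[of d p s] by (auto simp: coeff_1)

lemma Mb_point:
  assumes d: "d \<ge> 1" and m: "m \<ge> 1" and q: "q \<le> m"
  shows "real (Mb d (m - q)) \<le> (2 / real d) * (2 * real d) ^ (m - q) / sqrt (real m + 1) + sqrt ((2 * real d) ^ (m - 1))"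
proof -
  define p where "p = m - q"
  have t1: "(2 / real d) * (2 * real d) ^ p / sqrt (real m + 1) \<ge> 0" by simp
  have t2: "sqrt ((2 * real d) ^ (m - 1)) \<ge> 0" by simp
  show ?thesis
  proof (cases "2 * q \<le> m")
    case True
    then have p1: "p \<ge> 1" using m q unfolding p_def by linarith
    define B where "B = p choose (p div 2)"
    have MB: "real (Mb d p) = real d ^ (p - 1) * real B" using p1 unfolding Mb_def B_def by simp
    have pr: "real p = real m - real q" using q unfolding p_def by (simp add: of_nat_diff)
    have "real (2 * q) \<le> real m" using True by (simp only: of_nat_le_iff)
    then have "real m + 1 \<le> 2 * (real p + 1)" using pr by simp
    then have "sqrt (real m + 1) \<le> sqrt 2 * sqrt (real p + 1)"
      by (metis real_sqrt_le_mono real_sqrt_mult)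
    then have "real B * sqrt (real m + 1) \<le> sqrt 2 * (real B * sqrt (real p + 1))"
      using mult_left_mono[of "sqrt (real m + 1)" "sqrt 2 * sqrt (real p + 1)" "real B"] by (simp add: mult_ac)
    also have "\<dots> \<le> sqrt 2 * (sqrt 2 * 2 ^ p)" using B_sqrt[of p] unfolding B_def by (intro mult_left_mono) auto
    also have "\<dots> = 2 * 2 ^ p" by (simp add: mult.assoc[symmetric])
    finally have bb: "real B * sqrt (real m + 1) \<le> 2 * 2 ^ p" .
    have "real (Mb d p) * sqrt (real m + 1) \<le> real d ^ (p - 1) * (2 * 2 ^ p)"
      unfolding MB using mult_left_mono[OF bb, of "real d ^ (p - 1)"] by (simp add: mult_ac)
    also have "\<dots> = (2 / real d) * (2 * real d) ^ p"
    proof -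
      have "real d ^ p = real d * real d ^ (p - 1)" using p1 by (metis Suc_diff_1 less_le_trans power_Suc zero_less_one)
      then show ?thesis using d by (simp add: power_mult_distrib field_simps)
    qed
    finally have X: "real (Mb d p) * sqrt (real m + 1) \<le> (2 / real d) * (2 * real d) ^ p" .
    have pos: "sqrt (real m + 1) > 0" by simp
    have "real (Mb d p) \<le> (2 / real d) * (2 * real d) ^ p / sqrt (real m + 1)"
      by (subst pos_le_divide_eq[OF pos]) (rule X)
    then show ?thesis using t2 unfolding p_def by linarith
  next
    case False
    then have p2: "2 * p \<le> m - 1" using q unfolding p_def by linarith
    have "real (Mb d p) \<le> (2 * real d) ^ p"
    proof (cases "p = 0")
      case True then show ?thesis by (simp add: Mb_def)
    next
      case False
      have "real (p choose (p div 2)) \<le> 2 ^ p" using binomial_le_pow2[of p "p div 2"]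
        by (metis of_nat_le_iff of_nat_numeral of_nat_power)
      moreover have "real d ^ (p - 1) \<le> real d ^ p" using d by (intro power_increasing) auto
      ultimately have "real d ^ (p - 1) * real (p choose (p div 2)) \<le> real d ^ p * 2 ^ p"
        by (intro mult_mono) auto
      then show ?thesis using False by (simp add: Mb_def power_mult_distrib mult.commute)
    qed
    also have "(2 * real d) ^ p = sqrt ((2 * real d) ^ (2 * p))"
    proof -
      have "(2 * real d) ^ (2 * p) = ((2 * real d) ^ p) ^ 2" by (metis power_mult mult.commute)
      then show ?thesis by simp
    qed
    also have "\<dots> \<le> sqrt ((2 * real d) ^ (m - 1))"
      using d p2 by (intro real_sqrt_le_mono power_increasing) auto
    finally show ?thesis using t1 unfolding p_def by linarith
  qed
qed

lemma part2:
  assumes d: "d \<ge> 1"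
  shows "2 ^ (n+1) * sqrt ((2 * real d) ^ n) * sqrt (real (n+1) + 1) \<le> 6 * (2 * real d + 1) ^ n"
proof -
  define y where "y = 2 * real d + 1"
  define x where "x = 2 * real d"
  have d1: "real d \<ge> 1" using d by simp
  have e: "0 \<le> (4 * real d - 1) * (real d - 1)" using d1 by (intro mult_nonneg_nonneg) auto
  have a: "72 * real d \<le> 8 * y ^ 2" unfolding y_def power2_eq_square using e by (simp add: algebra_simps)
  have b: "(8 * real d) ^ n * 9 ^ n \<le> 8 ^ n * (y ^ 2) ^ n"
  proof -
    have "(72 * real d) ^ n = (8 * real d * 9) ^ n" by simp
    also have "\<dots> = (8 * real d) ^ n * 9 ^ n" by (rule power_mult_distrib)
    finally have "(8 * real d) ^ n * 9 ^ n = (72 * real d) ^ n" by (rule sym)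
    also have "\<dots> \<le> (8 * y ^ 2) ^ n" using a d1 by (intro power_mono) auto
    also have "\<dots> = 8 ^ n * (y ^ 2) ^ n" by (simp only: power_mult_distrib)
    finally show ?thesis .
  qed
  have c: "8 ^ n * (real n + 2) \<le> 8 * 9 ^ n"
  proof -
    have "8 ^ n * (real n + 2) \<le> 8 ^ n * (real n + 8)" by (intro mult_left_mono) auto
    then show ?thesis using bern98[of n] by linarith
  qed
  have L: "(2 ^ (n+1) * sqrt (x ^ n) * sqrt (real (n+1) + 1)) ^ 2 = 4 * (4 ^ n * x ^ n * (real n + 2))"
  proof -
    have x0: "x ^ n \<ge> 0" unfolding x_def by simp
    have "(2 ^ (n+1) * sqrt (x ^ n) * sqrt (real (n+1) + 1)) ^ 2 = (2 ^ (n+1)) ^ 2 * (sqrt (x ^ n)) ^ 2 * (sqrt (real (n+1) + 1)) ^ 2"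
      by (simp only: power_mult_distrib)
    also have "\<dots> = (2 ^ (n+1)) ^ 2 * x ^ n * (real n + 2)" using x0 by simp
    also have "(2::real) ^ (n+1) = 2 * 2 ^ n" by simp
    also have "(2 * (2::real) ^ n) ^ 2 = 4 * 4 ^ n"
    proof -
      have "(2 * (2::real) ^ n) ^ 2 = 2 ^ 2 * ((2::real) ^ n) ^ 2" by (rule power_mult_distrib)
      also have "((2::real) ^ n) ^ 2 = (2 ^ 2) ^ n" by (simp only: power_mult[symmetric] mult.commute)
      finally show ?thesis by simp
    qed
    finally show ?thesis by (simp add: mult.assoc)
  qed
  have xd: "4 ^ n * x ^ n = (8 * real d) ^ n"
  proof -
    have "(8 * real d) ^ n = (4 * x) ^ n" unfolding x_def by simp
    also have "\<dots> = 4 ^ n * x ^ n" by (rule power_mult_distrib)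
    finally show ?thesis by simp
  qed
  have M: "4 * (4 ^ n * x ^ n * (real n + 2)) \<le> 36 * (y ^ n) ^ 2"
  proof -
    have "4 * (4 ^ n * x ^ n * (real n + 2)) * 9 ^ n = 4 * (((8 * real d) ^ n * 9 ^ n) * (real n + 2))"
      unfolding xd by (simp only: mult_ac)
    also have "\<dots> \<le> 4 * ((8 ^ n * (y ^ 2) ^ n) * (real n + 2))"
      using b by (intro mult_left_mono mult_right_mono) auto
    also have "\<dots> = 4 * (y ^ 2) ^ n * (8 ^ n * (real n + 2))" by (simp only: mult_ac)
    also have "\<dots> \<le> 4 * (y ^ 2) ^ n * (8 * 9 ^ n)" using c by (intro mult_left_mono) auto
    also have "\<dots> = 32 * (y ^ n) ^ 2 * 9 ^ n"
    proof -
      have "(y ^ 2) ^ n = (y ^ n) ^ 2" by (simp only: power_mult[symmetric] mult.commute)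
      then show ?thesis by simp
    qed
    also have "\<dots> \<le> 36 * (y ^ n) ^ 2 * 9 ^ n" by (intro mult_right_mono) auto
    finally have "4 * (4 ^ n * x ^ n * (real n + 2)) * 9 ^ n \<le> 36 * (y ^ n) ^ 2 * 9 ^ n" .
    then show ?thesis by simp
  qed
  have sq: "(2 ^ (n+1) * sqrt (x ^ n) * sqrt (real (n+1) + 1)) ^ 2 \<le> (6 * y ^ n) ^ 2"
    using L M by (simp only: power_mult_distrib) simp
  have y0: "0 \<le> 6 * y ^ n" unfolding y_def by simp
  have "2 ^ (n+1) * sqrt (x ^ n) * sqrt (real (n+1) + 1) \<le> 6 * y ^ n"
    by (rule power2_le_imp_le[OF sq y0])
  then show ?thesis unfolding x_def y_def .
qed

lemma E1_odd:
  assumes d: "d \<ge> 1" and m: "m \<ge> 1"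
  shows "real (coeff (PP (2*d+1) ^ m) t) * sqrt (real m + 1) \<le> 12 * (2 * real d + 1) ^ (m - 1)"
proof -
  define S where "S = sqrt (real m + 1)"
  define G where "G = sqrt ((2 * real d) ^ (m - 1))"
  have S0: "S > 0" unfolding S_def by simp
  have d0: "real d > 0" using d by simp
  have c: "coeff (PP (2*d+1) ^ m) t \<le> (\<Sum>q\<le>m. (m choose q) * Mb d (m - q))"
    by (rule odd_expand[of d "Mb d", OF Mb_ok[OF d]])
  have "real (coeff (PP (2*d+1) ^ m) t) \<le> (\<Sum>q\<le>m. real (m choose q) * real (Mb d (m - q)))"
    using c by (metis (mono_tags, lifting) of_nat_le_iff of_nat_mult of_nat_sum sum.cong)
  also have "\<dots> \<le> (\<Sum>q\<le>m. real (m choose q) * ((2 / real d) * (2 * real d) ^ (m - q) / S + G))"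
    unfolding S_def G_def using Mb_point[OF d m] by (intro sum_mono mult_left_mono) auto
  also have "\<dots> = (2 / real d) / S * (\<Sum>q\<le>m. real (m choose q) * (2 * real d) ^ (m - q)) + G * (\<Sum>q\<le>m. real (m choose q))"
    by (simp add: sum.distrib sum_distrib_left algebra_simps)
  also have "(\<Sum>q\<le>m. real (m choose q) * (2 * real d) ^ (m - q)) = (2 * real d + 1) ^ m"
  proof -
    have "(1 + 2 * real d) ^ m = (\<Sum>q\<le>m. of_nat (m choose q) * 1 ^ q * (2 * real d) ^ (m - q))"
      by (rule binomial_ring)
    then show ?thesis by (simp add: add.commute)
  qed
  also have "(\<Sum>q\<le>m. real (m choose q)) = 2 ^ m"
    using choose_row_sum[of m] by (metis of_nat_numeral of_nat_power of_nat_sum)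
  finally have A: "real (coeff (PP (2*d+1) ^ m) t) \<le> (2 / real d) / S * (2 * real d + 1) ^ m + G * 2 ^ m" .
  have "real (coeff (PP (2*d+1) ^ m) t) * S \<le> ((2 / real d) / S * (2 * real d + 1) ^ m + G * 2 ^ m) * S"
    using mult_right_mono[OF A] S0 by simp
  also have "\<dots> = (2 / real d) * (2 * real d + 1) ^ m + 2 ^ m * G * S" using S0 by (simp add: field_simps)
  also have "(2 / real d) * (2 * real d + 1) ^ m \<le> 6 * (2 * real d + 1) ^ (m - 1)"
  proof -
    have "(2 * real d + 1) ^ m = (2 * real d + 1) * (2 * real d + 1) ^ (m - 1)"
      using m by (metis Suc_diff_1 less_le_trans power_Suc zero_less_one)
    moreover have "(2 / real d) * (2 * real d + 1) \<le> 6" using d0 d by (simp add: field_simps)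
    ultimately show ?thesis using mult_right_mono[of "(2 / real d) * (2 * real d + 1)" 6 "(2 * real d + 1) ^ (m - 1)"]
      by (simp only: mult.assoc) simp
  qed
  also have "2 ^ m * G * S \<le> 6 * (2 * real d + 1) ^ (m - 1)"
  proof -
    obtain n where n: "m = n + 1" using m by (metis Suc_eq_plus1 Suc_diff_1 less_le_trans zero_less_one)
    show ?thesis using part2[OF d, of n] unfolding G_def S_def n by simp
  qed
  finally show ?thesis unfolding S_def by simp
qed

lemma E1:
  assumes k: "k \<ge> 2" and m: "m \<ge> 1"
  shows "real (card (lev k m t)) * sqrt (real m + 1) \<le> 12 * real k ^ (m - 1)"
proof (cases "even k")
  case True
  then obtain d where kd: "k = 2*d" by auto
  have d: "d \<ge> 1" using k kd by simp
  have "real (card (lev k m t)) * sqrt (real m + 1) \<le> 2 * sqrt 2 * (2 * real d) ^ (m - 1)"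
    unfolding lev_coeff kd by (rule E1_even[OF d m])
  also have "\<dots> \<le> 12 * real k ^ (m - 1)"
  proof -
    have "sqrt 2 \<le> sqrt (2^2)" by (rule real_sqrt_le_mono) simp
    then have "sqrt 2 \<le> 2" by simp
    then have "2 * sqrt 2 \<le> 12" by simp
    then have "2 * sqrt 2 * (2 * real d) ^ (m - 1) \<le> 12 * (2 * real d) ^ (m - 1)"
      by (intro mult_right_mono) auto
    then show ?thesis unfolding kd by simp
  qed
  finally show ?thesis .
next
  case False
  then obtain d where kd: "k = 2*d+1" using oddE by blast
  have d: "d \<ge> 1" using k kd by simp
  show ?thesis unfolding lev_coeff kd using E1_odd[OF d m, of t] by (simp add: add.commute)
qed



lemma width_half:
  assumes k: "k \<ge> 2" and a: "a \<ge> 1"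
  shows "real (grid_width k a) * sqrt (real a + 1) \<le> 24 * real k ^ (a - 1)"
proof -
  have "real (grid_width k a) \<le> real (2 * card (lev k a (a*(k-1) div 2)))"
    using width_bound[of k a] by (simp only: of_nat_le_iff)
  then have w: "real (grid_width k a) \<le> 2 * real (card (lev k a (a*(k-1) div 2)))" by simp
  have s0: "sqrt (real a + 1) \<ge> 0" by simp
  have "real (grid_width k a) * sqrt (real a + 1) \<le> 2 * (real (card (lev k a (a*(k-1) div 2))) * sqrt (real a + 1))"
    using mult_right_mono[OF w s0] by (simp add: mult.assoc)
  also have "\<dots> \<le> 2 * (12 * real k ^ (a - 1))" using E1[OF k a] by (intro mult_left_mono) auto
  finally show ?thesis by simp
qed

lemma part_bound:
  assumes k: "k \<ge> 2" and a: "a \<ge> 1" and n: "n = a + b" and na: "n \<le> 2 * (a + 1)"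
  shows "real (k ^ b * grid_width k a) * sqrt (real n) \<le> 24 * sqrt 2 * real k ^ (n - 1)"
proof -
  have "real n \<le> real (2 * (a + 1))" using na by (simp only: of_nat_le_iff)
  then have "real n \<le> 2 * (real a + 1)" by simp
  then have "sqrt (real n) \<le> sqrt (2 * (real a + 1))" by (rule real_sqrt_le_mono)
  also have "\<dots> = sqrt 2 * sqrt (real a + 1)" by (rule real_sqrt_mult)
  finally have sn: "sqrt (real n) \<le> sqrt 2 * sqrt (real a + 1)" .
  have kb: "real k ^ b \<ge> 0" by simp
  have "real (k ^ b * grid_width k a) * sqrt (real n) \<le> real k ^ b * real (grid_width k a) * (sqrt 2 * sqrt (real a + 1))"
    using sn by (simp add: mult_left_mono)
  also have "\<dots> = sqrt 2 * (real k ^ b * (real (grid_width k a) * sqrt (real a + 1)))" by (simp add: mult_ac)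
  also have "\<dots> \<le> sqrt 2 * (real k ^ b * (24 * real k ^ (a - 1)))"
    using width_half[OF k a] kb by (intro mult_left_mono) auto
  also have "real k ^ b * (24 * real k ^ (a - 1)) = 24 * real k ^ (n - 1)"
  proof -
    have e: "b + (a - 1) = n - 1" using n a by simp
    have "real k ^ (n - 1) = real k ^ (b + (a - 1))" unfolding e ..
    also have "\<dots> = real k ^ b * real k ^ (a - 1)" by (rule power_add)
    finally show ?thesis by simp
  qed
  finally show ?thesis by (simp add: mult_ac)
qed

theorem theorem2p6:
  shows "\<exists>K::real. \<forall>k n :: nat. \<forall>F. k > 1 \<longrightarrow> n > 1 \<longrightarrow> F \<subseteq> grid k n \<longrightarrow>
     \<not> (\<exists>u\<in>F. \<exists>v\<in>F. \<exists>w\<in>F. u \<noteq> v \<and> u \<noteq> w \<and> v \<noteq> w \<and> u = join n v w) \<longrightarrow>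
     real (card F) \<le> K * real (grid_width k n)"
proof (intro exI[of _ 272] allI impI)
  fix k n :: nat and F
  assume k1: "k > 1" and n1: "n > 1" and FG: "F \<subseteq> grid k n"
    and uf: "\<not> (\<exists>u\<in>F. \<exists>v\<in>F. \<exists>w\<in>F. u \<noteq> v \<and> u \<noteq> w \<and> v \<noteq> w \<and> u = join n v w)"
  have k: "k \<ge> 2" using k1 by simp
  define a where "a = n div 2"
  define b where "b = n - a"
  have a1: "a \<ge> 1" and b1: "b \<ge> 1" and nab: "n = a + b" and nba: "n = b + a"
    using n1 unfolding a_def b_def by auto
  have na: "n \<le> 2 * (a + 1)" and nb: "n \<le> 2 * (b + 1)" unfolding a_def b_def by auto
  define W where "W = real (grid_width k n)"
  define X where "X = real k ^ (n - 1)"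
  define s where "s = sqrt (real n)"
  have s0: "s > 0" using n1 unfolding s_def by simp
  have c: "card F \<le> k ^ b * grid_width k a + k ^ a * grid_width k b"
    by (rule fiber_lemma[OF FG nab uf])
  then have "real (card F) \<le> real (k ^ b * grid_width k a + k ^ a * grid_width k b)"
    by (simp only: of_nat_le_iff)
  then have "real (card F) \<le> real (k ^ b * grid_width k a) + real (k ^ a * grid_width k b)"
    by (simp only: of_nat_add)
  then have "real (card F) * s \<le> (real (k ^ b * grid_width k a) + real (k ^ a * grid_width k b)) * s"
    using s0 by (intro mult_right_mono) auto
  also have "\<dots> = real (k ^ b * grid_width k a) * s + real (k ^ a * grid_width k b) * s"
    by (simp add: algebra_simps)
  also have "\<dots> \<le> 24 * sqrt 2 * X + 24 * sqrt 2 * X"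
    using part_bound[OF k a1 nab na] part_bound[OF k b1 nba nb] unfolding s_def X_def by linarith
  finally have A: "real (card F) * s \<le> 48 * sqrt 2 * X" by (simp add: mult_ac)
  obtain t where t: "real k ^ n \<le> 4 * real k * s * real (card (lev k n t))"
    using big_level[OF k, of n] n1 unfolding s_def by auto
  have "real (card (lev k n t)) \<le> W"
    unfolding W_def using antichain_le_width[OF lev_antichain] by simp
  then have "4 * real k * s * real (card (lev k n t)) \<le> 4 * real k * s * W"
    by (rule mult_left_mono) (use s0 in simp)
  then have t2: "real k ^ n \<le> 4 * real k * s * W" using t by linarith
  obtain n' where n': "n = Suc n'" using n1 by (cases n) auto
  have "real k ^ n = real k * X" unfolding X_def n' by simp
  then have "real k * X \<le> real k * (4 * s * W)" using t2 by (simp add: mult_ac)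
  then have XW: "X \<le> 4 * s * W" using k by simp
  have r2: "sqrt 2 \<le> 17 / 12"
  proof -
    have "sqrt 2 \<le> sqrt ((17 / 12) ^ 2)" by (rule real_sqrt_le_mono) (simp add: power2_eq_square)
    then show ?thesis by simp
  qed
  have X0: "X \<ge> 0" unfolding X_def by simp
  have "48 * sqrt 2 * X \<le> 48 * (17 / 12) * X" using r2 X0 by (intro mult_right_mono) auto
  then have "real (card F) * s \<le> 48 * (17 / 12) * X" using A by linarith
  also have "\<dots> \<le> 68 * (4 * s * W)" using XW by (simp add: mult_ac)
  finally have "real (card F) * s \<le> (272 * W) * s" by (simp add: mult_ac)
  then show "real (card F) \<le> 272 * real (grid_width k n)" using s0 unfolding W_def by simp
qed


end
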